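(* Let $(g,\gamma)$ be a construction pair on an abelian group $(X,+)$. Then $(g^{-1},g\circ\gamma)$ is a construction pair on $(X,+)$, where $(g\circ\gamma)(x,y)=g(\gamma(x,y))$.
   Context: A map $\gamma:X\times X\to X$ is symmetric if $\gamma(x,y)=\gamma(y,x)$, alternating if $\gamma(x,x)=0$, biadditive if additive in each argument. A construction pair on $(X,+)$ is a pair $(g,\gamma)$ where $g$ is a permutation of $X$ and $\gamma:X\times X\to X$ is symmetric, alternating and biadditive, such that for all $x,y,z\in X$: (C1) $g^{-1}(g(x)+g(y))=x+y+\gamma(x,y)+g^{-1}(\gamma(x,y))+g^{-2}(\gamma(x,y))$; (C2) $\gamma(\gamma(x,y),z)=0$; (C3) $g^{-1}(\gamma(x,y))=\gamma(g(x),y)$. *)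

theory Defs
  imports Main
begin

definition biadditive :: "('a::ab_group_add \<Rightarrow> 'a \<Rightarrow> 'a) \<Rightarrow> bool" where
  "biadditive \<gamma> \<longleftrightarrow>
     (\<forall>x y z. \<gamma> (x + y) z = \<gamma> x z + \<gamma> y z) \<and>
     (\<forall>x y z. \<gamma> x (y + z) = \<gamma> x y + \<gamma> x z)"

definition symmetric_map :: "('a \<Rightarrow> 'a \<Rightarrow> 'a) \<Rightarrow> bool" where
  "symmetric_map \<gamma> \<longleftrightarrow> (\<forall>x y. \<gamma> x y = \<gamma> y x)"

definition alternating :: "('a::zero \<Rightarrow> 'a \<Rightarrow> 'a) \<Rightarrow> bool" where
  "alternating \<gamma> \<longleftrightarrow> (\<forall>x. \<gamma> x x = 0)"

definition construction_pair :: "('a::ab_group_add \<Rightarrow> 'a) \<Rightarrow> ('a \<Rightarrow> 'a \<Rightarrow> 'a) \<Rightarrow> bool" where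
  "construction_pair g \<gamma> \<longleftrightarrow>
     bij g \<and> symmetric_map \<gamma> \<and> alternating \<gamma> \<and> biadditive \<gamma> \<and>
     (\<forall>x y. inv g (g x + g y) = x + y + \<gamma> x y + inv g (\<gamma> x y) + inv g (inv g (\<gamma> x y))) \<and>
     (\<forall>x y z. \<gamma> (\<gamma> x y) z = 0) \<and>
     (\<forall>x y. inv g (\<gamma> x y) = \<gamma> (g x) y)"

end

theory Submission
  imports Defs
begin

lemma tor_alg: "(u::'a::ab_group_add) + G + c + H = A + B \<Longrightarrow> c + c = 0 \<Longrightarrow> H+H=0 \<Longrightarrow> G+G=0 \<Longrightarrow> u = A + B + H + c + G"
proof -
  assume h1: "u + G + c + H = A + B" and h2: "c + c = 0" and h3: "H+H=0" and h4: "G+G=0"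
  have "u = u + (G+G) + (c+c) + (H+H)" using h2 h3 h4 by simp
  also have "\<dots> = (u + G + c + H) + H + c + G" by (simp only: ac_simps)
  also have "\<dots> = A + B + H + c + G" using h1 by simp
  finally show ?thesis .
qed

theorem mainTheorem19:
  fixes g :: "'a::ab_group_add \<Rightarrow> 'a" and \<gamma> :: "'a \<Rightarrow> 'a \<Rightarrow> 'a"
  assumes "construction_pair g \<gamma>"
  shows "construction_pair (inv g) (\<lambda>x y. g (\<gamma> x y))"
proof -
  define h where "h = inv g"
  have bg: "bij g" and sym: "\<And>x y. \<gamma> x y = \<gamma> y x" and alt: "\<And>x. \<gamma> x x = 0"
    and addL: "\<And>x y z. \<gamma> (x + y) z = \<gamma> x z + \<gamma> y z"
    and addR: "\<And>x y z. \<gamma> x (y + z) = \<gamma> x y + \<gamma> x z"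
    and C1: "\<And>x y. h (g x + g y) = x + y + \<gamma> x y + h (\<gamma> x y) + h (h (\<gamma> x y))"
    and C2: "\<And>x y z. \<gamma> (\<gamma> x y) z = 0"
    and C3: "\<And>x y. h (\<gamma> x y) = \<gamma> (g x) y"
    using assms unfolding construction_pair_def symmetric_map_def alternating_def biadditive_def h_def
    by blast+
  have hg: "\<And>x. h (g x) = x" using bg unfolding h_def by (simp add: bij_is_inj)
  have gh: "\<And>x. g (h x) = x" using bg unfolding h_def by (simp add: bij_is_surj surj_f_inv_f)
  have ihg: "inv h = g" using bg unfolding h_def by (simp add: inv_inv_eq)
  have bh: "bij h" using bg unfolding h_def by (simp add: bij_imp_bij_inv)
  have g0z: "\<And>z. \<gamma> 0 z = 0" using addL[of 0 0] by simp
  have h0: "h 0 = 0" using C3[of 0 0] g0z[of "g 0"] sym[of "g 0" 0] g0z[of 0] by simp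
  have g0: "g 0 = 0" using gh[of 0] h0 by simp
  define N where "N t \<longleftrightarrow> (\<forall>z. \<gamma> t z = 0)" for t
  have Nim: "N (\<gamma> x y)" for x y using C2 N_def by auto
  have Nadd: "N s \<Longrightarrow> N t \<Longrightarrow> N (s + t)" for s t using addL N_def by auto
  have Ng: "N t \<Longrightarrow> N (g t)" for t unfolding N_def by (simp add: C3[symmetric] h0)
  have gim: "g (\<gamma> s v) = \<gamma> (h s) v" for s v
  proof -
    have "\<gamma> (h s) v = g (h (\<gamma> (h s) v))" by (simp add: gh)
    also have "\<dots> = g (\<gamma> s v)" using C3[of "h s" v] gh by simp
    finally show ?thesis by simp
  qed
  have Nh: "N t \<Longrightarrow> N (h t)" for t unfolding N_def by (simp add: gim[symmetric] g0)
  have gadd: "N t \<Longrightarrow> g (s + t) = g s + g t" for s t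
  proof -
    assume "N t"
    hence "\<gamma> s t = 0" using sym[of s t] unfolding N_def by simp
    hence "h (g s + g t) = s + t" using C1[of s t] h0 by simp
    hence "g (h (g s + g t)) = g (s + t)" by simp
    thus ?thesis using gh by simp
  qed
  have tor: "\<gamma> x y + \<gamma> x y = 0" for x y
  proof -
    have "0 = \<gamma> (x+y) (x+y)" using alt by simp
    also have "\<dots> = \<gamma> x x + \<gamma> x y + (\<gamma> y x + \<gamma> y y)" by (simp add: addL addR add.assoc)
    also have "\<dots> = \<gamma> x y + \<gamma> x y" using alt[of x] alt[of y] sym[of y x] by simp
    finally show ?thesis by simp
  qed
  have him: "h (\<gamma> s v) = \<gamma> (g s) v" for s v using C3 by simp
  show ?thesis
    unfolding construction_pair_def symmetric_map_def alternating_def biadditive_def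
    unfolding h_def[symmetric] ihg
  proof (intro conjI allI)
    show "bij h" by (rule bh)
    show "g (\<gamma> x y) = g (\<gamma> y x)" for x y using sym[of x y] by simp
    show "g (\<gamma> x x) = 0" for x using alt g0 by simp
    show "g (\<gamma> (x + y) z) = g (\<gamma> x z) + g (\<gamma> y z)" for x y z using addL[of x y z] gadd[OF Nim[of y z], of "\<gamma> x z"] by simp
    show "g (\<gamma> x (y + z)) = g (\<gamma> x y) + g (\<gamma> x z)" for x y z using addR[of x y z] gadd[OF Nim[of x z], of "\<gamma> x y"] by simp
    show "g (\<gamma> (g (\<gamma> x y)) z) = 0" for x y z using gim C2 g0 by simp
    show "g (g (\<gamma> x y)) = g (\<gamma> (h x) y)" for x y using gim by simp
    show "g (h x + h y) = x + y + g (\<gamma> x y) + g (g (\<gamma> x y)) + g (g (g (\<gamma> x y)))" for x y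
    proof -
      define a b where "a = h x" and "b = h y"
      have xa: "x = g a" and yb: "y = g b" using gh a_def b_def by auto
      define c where "c = \<gamma> a b"
      have e1: "\<gamma> x y = h (h c)"
      proof -
        have "\<gamma> x y = h (\<gamma> a (g b))" unfolding xa yb by (rule him[symmetric])
        also have "\<dots> = h (\<gamma> (g b) a)" using sym[of a "g b"] by simp
        also have "\<dots> = h (h (\<gamma> b a))" by (simp add: him[of b a])
        finally show ?thesis using sym[of b a] c_def by simp
      qed
      have Nc: "N c" using Nim c_def by simp
      have gc: "g (\<gamma> x y) = h c" using e1 gh by simp
      have ggc: "g (g (\<gamma> x y)) = c" using gc gh by simp
      have C1': "g (a + b + c + h c + h (h c)) = g a + g b"
      proof -
        have "h (g a + g b) = a+b+c+h c + h (h c)" using C1[of a b] c_def by simp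
        hence "g (a+b+c+h c+h(h c)) = g(h(g a + g b))" by simp
        thus ?thesis using gh by simp
      qed
      have "g (a + b + c + h c + h (h c)) = g (a + b) + g c + g (h c) + g (h (h c))"
      proof -
        have N1: "N (h c)" using Nh Nc by blast
        have N2: "N (h (h c))" using Nh N1 by blast
        have "g (a + b + c + h c + h (h c)) = g (a + b + c + h c) + g (h (h c))" using gadd N2 by blast
        also have "g (a + b + c + h c) = g (a + b + c) + g (h c)" using gadd N1 by blast
        also have "g (a + b + c) = g (a + b) + g c" using gadd Nc by blast
        finally show ?thesis .
      qed
      hence "g (a+b) + g c + c + h c = g a + g b" using C1' gh by simp
      moreover have "c + c = 0" using tor c_def by simp
      moreover have "h c + h c = 0" using tor c_def him by simp
      moreover have "g c + g c = 0" using tor c_def gim by simp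
      ultimately have "g (a+b) = g a + g b + h c + c + g c"
        by (rule tor_alg)
      hence F: "g (a+b) = x + y + h c + c + g c" using xa yb by simp
      show ?thesis using F unfolding a_def b_def gc by (simp add: gh)
    qed
  qed
qed

end
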